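(* Let $n\geqslant2$. Then $\mathrm{SR}(n+1,n)=\binom{n+3}{3}$ and $\mathrm{SR}(n,n)=\binom{n+3}{3}-\left\lfloor\frac{n+2}{2}\right\rfloor\left\lceil\frac{n+2}{2}\right\rceil$.
   Context: Let $p,q$ be distinct primes and $n,m$ positive integers. In $C_{p^nq^m}$ let $C_{p^aq^x}$ be the unique subgroup of order $p^aq^x$, and write $(a,x;b,y)$ for the pair of subgroups $(C_{p^aq^x},C_{p^bq^y})$ with $0\leqslant a\leqslant b\leqslant n$, $0\leqslant x\leqslant y\leqslant m$, $(a,x)\neq(b,y)$. Its midpoint is $(a+x+b+y)/2$, and $R_M$ is the set of all such pairs with midpoint $M$. The simple rainbow number $\mathrm{SR}(n,m)$ is $|R_{(n+m)/2}|$ if $n+m$ is odd, and $|R_{(n+m-1)/2}|$ (which equals $|R_{(n+m+1)/2}|$) if $n+m$ is even. *)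

theory Defs
  imports Complex_Main
begin

text \<open>A pair (a,x;b,y) of subgroups of the cyclic group of order p^n q^m, encoded by
  their exponent pairs ((a,x),(b,y)). The set of such pairs whose midpoint
  (a+x+b+y)/2 equals M is described via the doubled midpoint D = 2M, so that
  R_M corresponds to pairs_with_double_mid n m (2M).\<close>

definition subgroup_pairs :: "nat \<Rightarrow> nat \<Rightarrow> ((nat \<times> nat) \<times> (nat \<times> nat)) set" where
  "subgroup_pairs n m = {((a,x),(b,y)). a \<le> b \<and> b \<le> n \<and> x \<le> y \<and> y \<le> m \<and> (a,x) \<noteq> (b,y)}"

definition R_double :: "nat \<Rightarrow> nat \<Rightarrow> nat \<Rightarrow> ((nat \<times> nat) \<times> (nat \<times> nat)) set" where
  "R_double n m D = {((a,x),(b,y)) \<in> subgroup_pairs n m. a + x + b + y = D}"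

definition SR :: "nat \<Rightarrow> nat \<Rightarrow> nat" where
  "SR n m = (if odd (n + m) then card (R_double n m (n + m))
             else card (R_double n m (n + m - 1)))"

end

theory Submission
  imports Defs
begin

definition Pset :: "nat \<Rightarrow> (nat \<times> nat) set" where
  "Pset K = {(x,y). x \<le> y \<and> y \<le> K \<and> odd (x+y)}"

lemma Q: "card {x::nat. x \<le> K \<and> odd (x + K + 1)} = (K + 2) div 2"
proof (induction K rule: less_induct)
  case (less K)
  show ?case
  proof (cases "K \<le> 1")
    case True
    then have "K = 0 \<or> K = 1" by auto
    then show ?thesis
    proof
      assume "K = 0"
      then have "{x::nat. x \<le> K \<and> odd (x + K + 1)} = {0}" by auto
      then show ?thesis using \<open>K = 0\<close> by simp
    next
      assume "K = 1"
      then have "{x::nat. x \<le> K \<and> odd (x + K + 1)} = {1}" by (auto simp: le_Suc_eq)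
      then show ?thesis using \<open>K = 1\<close> by simp
    qed
  next
    case False
    then obtain J where J: "K = J + 2" by (metis add.commute le_add_diff_inverse2 nat_le_linear not_less_eq_eq one_add_one plus_1_eq_Suc)
    have e: "{x::nat. x \<le> K \<and> odd (x + K + 1)} = insert (J+2) {x. x \<le> J \<and> odd (x + J + 1)}"
      using J by (auto, presburger+)
    have "finite {x::nat. x \<le> J \<and> odd (x + J + 1)}" by auto
    moreover have "J + 2 \<notin> {x::nat. x \<le> J \<and> odd (x + J + 1)}" by auto
    ultimately show ?thesis using e less[of J] J by simp
  qed
qed

lemma P_fin: "finite (Pset K)"
proof -
  have "Pset K \<subseteq> {0..K} \<times> {0..K}" unfolding Pset_def by auto
  then show ?thesis by (rule finite_subset) auto
qed

lemma P_suc: "card (Pset (Suc K)) = card (Pset K) + (K + 2) div 2"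
proof -
  have e: "Pset (Suc K) = Pset K \<union> (\<lambda>x. (x, Suc K)) ` {x::nat. x \<le> K \<and> odd (x + K + 1)}"
    unfolding Pset_def by (auto simp: le_Suc_eq)
  have d: "Pset K \<inter> (\<lambda>x. (x, Suc K)) ` {x::nat. x \<le> K \<and> odd (x + K + 1)} = {}"
    unfolding Pset_def by auto
  have "card ((\<lambda>x. (x, Suc K)) ` {x::nat. x \<le> K \<and> odd (x + K + 1)}) = (K+2) div 2"
  proof -
    have "inj_on (\<lambda>x. (x, Suc K)) {x::nat. x \<le> K \<and> odd (x + K + 1)}" by (auto simp: inj_on_def)
    then show ?thesis using Q[of K] by (simp only: card_image)
  qed
  then show ?thesis using e d P_fin by (simp add: card_Un_disjoint)
qed

lemma P_formula: "card (Pset K) = ((K+1) div 2) * ((K+2) div 2)"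
proof (induction K)
  case 0
  have "Pset 0 = {}" unfolding Pset_def by auto
  then show ?case by simp
next
  case (Suc K)
  have "card (Pset (Suc K)) = ((K+1) div 2) * ((K+2) div 2) + (K + 2) div 2"
    using P_suc Suc by simp
  also have "\<dots> = ((Suc K+1) div 2) * ((Suc K+2) div 2)"
  proof (cases "even K")
    case True then obtain r where "K = 2*r" by blast
    then show ?thesis by simp
  next
    case False then obtain r where "K = 2*r+1" using oddE by blast
    then show ?thesis by simp
  qed
  finally show ?case .
qed


lemma R_fin: "finite (R_double N M D)"
proof -
  have "R_double N M D \<subseteq> ({0..N} \<times> {0..M}) \<times> ({0..N} \<times> {0..M})"
    unfolding R_double_def subgroup_pairs_def by auto
  then show ?thesis by (rule finite_subset) auto
qed

lemma step_lemma:
  assumes "odd D" "D + 2 \<le> 2*N + 3" "2*M + 1 \<le> D + 2" "D + 2 \<le> 2*M+3" "2*N+1 \<le> D+2"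
  shows "card (R_double (N+1) (M+1) (D+2)) = card (R_double N M D) + card (Pset (M+1)) + card (Pset (N+1))"
proof -
  define S where "S = R_double (N+1) (M+1) (D+2)"
  define \<psi> :: "(nat \<times> nat) \<times> (nat \<times> nat) \<Rightarrow> (nat \<times> nat) \<times> (nat \<times> nat)"
    where "\<psi> = (\<lambda>((a,x),(b,y)). ((a,x),(b+1,y+1)))"
  define SA where "SA = {p \<in> S. fst (fst p) = fst (snd p)}"
  define SB where "SB = {p \<in> S. snd (fst p) = snd (snd p)}"
  define gA :: "nat \<times> nat \<Rightarrow> (nat \<times> nat) \<times> (nat \<times> nat)"
    where "gA = (\<lambda>(x,y). (((D+2-x-y) div 2, x), ((D+2-x-y) div 2, y)))"
  define gB :: "nat \<times> nat \<Rightarrow> (nat \<times> nat) \<times> (nat \<times> nat)"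
    where "gB = (\<lambda>(a,b). ((a, (D+2-a-b) div 2), (b, (D+2-a-b) div 2)))"
  have SU: "S = \<psi> ` R_double N M D \<union> SA \<union> SB"
  proof
    show "\<psi> ` R_double N M D \<union> SA \<union> SB \<subseteq> S"
      unfolding S_def SA_def SB_def \<psi>_def R_double_def subgroup_pairs_def by auto
  next
    show "S \<subseteq> \<psi> ` R_double N M D \<union> SA \<union> SB"
    proof
      fix p assume p: "p \<in> S"
      obtain a x b y where pe: "p = ((a,x),(b,y))" by (metis prod.collapse)
      show "p \<in> \<psi> ` R_double N M D \<union> SA \<union> SB"
      proof (cases "a = b \<or> x = y")
        case True then show ?thesis using p pe unfolding SA_def SB_def by auto
      next
        case False
        have h: "a < b" "b \<le> N+1" "x < y" "y \<le> M+1" "a + x + b + y = D + 2"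
          using p pe False unfolding S_def R_double_def subgroup_pairs_def by auto
        have ne: "(a,x) \<noteq> (b-1,y-1)"
        proof
          assume "(a,x) = (b-1,y-1)"
          then have "D + 2 = 2*(a+x+1)" using h by auto
          then have "even (D+2)" by simp
          then show False using assms(1) by simp
        qed
        have "((a,x),(b-1,y-1)) \<in> R_double N M D"
          using h ne unfolding R_double_def subgroup_pairs_def by auto
        moreover have "p = \<psi> ((a,x),(b-1,y-1))"
          using p pe False unfolding S_def \<psi>_def R_double_def subgroup_pairs_def by auto
        ultimately show ?thesis by blast
      qed
    qed
  qed
  have d1: "\<psi> ` R_double N M D \<inter> SA = {}"
    unfolding SA_def \<psi>_def R_double_def subgroup_pairs_def by auto
  have d2: "(\<psi> ` R_double N M D \<union> SA) \<inter> SB = {}"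
  proof -
    have "\<psi> ` R_double N M D \<inter> SB = {}"
      unfolding SB_def \<psi>_def R_double_def subgroup_pairs_def by auto
    moreover have "SA \<inter> SB = {}"
    proof (rule ccontr)
      assume "SA \<inter> SB \<noteq> {}"
      then obtain a x b y where "((a,x),(b,y)) \<in> SA" "((a,x),(b,y)) \<in> SB" by auto
      then have "a = b" "x = y" "a + x + b + y = D + 2"
        unfolding SA_def SB_def S_def R_double_def by auto
      then show False using assms(1) by presburger
    qed
    ultimately show ?thesis by blast
  qed
  have injpsi: "inj_on \<psi> (R_double N M D)"
    unfolding \<psi>_def inj_on_def by auto
  have fS: "finite S" unfolding S_def by (rule R_fin)
  have fA: "finite SA" using fS unfolding SA_def by auto
  have fB: "finite SB" using fS unfolding SB_def by auto
  have cA: "card SA = card (Pset (M+1))"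
  proof -
    have "inj_on gA (Pset (M+1))" unfolding gA_def inj_on_def by auto
    moreover have "gA ` Pset (M+1) = SA"
    proof
      show "gA ` Pset (M+1) \<subseteq> SA"
      proof
        fix p assume "p \<in> gA ` Pset (M+1)"
        then obtain x y where xy: "x \<le> y" "y \<le> M+1" "odd (x+y)" and pe: "p = gA (x,y)"
          unfolding Pset_def by auto
        have "x + y \<le> D + 2" using xy assms by presburger
        then show "p \<in> SA" using xy assms pe unfolding gA_def SA_def S_def R_double_def subgroup_pairs_def
          by (auto; presburger)
      qed
    next
      show "SA \<subseteq> gA ` Pset (M+1)"
      proof
        fix p assume p: "p \<in> SA"
        obtain a x b y where pe: "p = ((a,x),(b,y))" by (metis prod.collapse)
        have h: "a = b" "x \<le> y" "y \<le> M+1" "a + x + b + y = D + 2"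
          using p pe unfolding SA_def S_def R_double_def subgroup_pairs_def by auto
        then have "odd (x+y)" using assms(1) by presburger
        moreover have "p = gA (x,y)" using h pe unfolding gA_def by auto
        ultimately show "p \<in> gA ` Pset (M+1)" using h unfolding Pset_def by auto
      qed
    qed
    ultimately show ?thesis by (metis card_image)
  qed
  have cB: "card SB = card (Pset (N+1))"
  proof -
    have "inj_on gB (Pset (N+1))" unfolding gB_def inj_on_def by auto
    moreover have "gB ` Pset (N+1) = SB"
    proof
      show "gB ` Pset (N+1) \<subseteq> SB"
      proof
        fix p assume "p \<in> gB ` Pset (N+1)"
        then obtain x y where xy: "x \<le> y" "y \<le> N+1" "odd (x+y)" and pe: "p = gB (x,y)"
          unfolding Pset_def by auto
        have "x + y \<le> D + 2" using xy assms by presburger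
        then show "p \<in> SB" using xy assms pe unfolding gB_def SB_def S_def R_double_def subgroup_pairs_def
          by (auto; presburger)
      qed
    next
      show "SB \<subseteq> gB ` Pset (N+1)"
      proof
        fix p assume p: "p \<in> SB"
        obtain a x b y where pe: "p = ((a,x),(b,y))" by (metis prod.collapse)
        have h: "x = y" "a \<le> b" "b \<le> N+1" "a + x + b + y = D + 2"
          using p pe unfolding SB_def S_def R_double_def subgroup_pairs_def by auto
        then have "odd (a+b)" using assms(1) by presburger
        moreover have "p = gB (a,b)" using h pe unfolding gB_def by auto
        ultimately show "p \<in> gB ` Pset (N+1)" using h unfolding Pset_def by auto
      qed
    qed
    ultimately show ?thesis by (metis card_image)
  qed
  have "card S = card (\<psi> ` R_double N M D \<union> SA) + card SB"
    using SU d2 fS fA fB by (simp add: card_Un_disjoint)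
  also have "card (\<psi> ` R_double N M D \<union> SA) = card (\<psi> ` R_double N M D) + card SA"
    using d1 fA R_fin by (simp add: card_Un_disjoint)
  also have "card (\<psi> ` R_double N M D) = card (R_double N M D)"
    using injpsi by (rule card_image)
  finally show ?thesis using cA cB unfolding S_def by simp
qed


lemma P_pair: "card (Pset (n+1)) + card (Pset (n+2)) = (n+3) choose 2"
proof -
  have c2: "(n+3) choose 2 = (n+3)*(n+2) div 2" by (simp add: choose_two)
  show ?thesis unfolding c2 P_formula
  proof (cases "even n")
    case True then obtain r where "n = 2*r" by blast
    then show "(n + 1 + 1) div 2 * ((n + 1 + 2) div 2) + (n + 2 + 1) div 2 * ((n + 2 + 2) div 2) = (n + 3) * (n + 2) div 2"
      by (simp add: algebra_simps)
  next
    case False then obtain r where "n = 2*r+1" using oddE by blast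
    then show "(n + 1 + 1) div 2 * ((n + 1 + 2) div 2) + (n + 2 + 1) div 2 * ((n + 2 + 2) div 2) = (n + 3) * (n + 2) div 2"
      by (simp add: algebra_simps)
  qed
qed

lemma F1: "card (R_double (n+1) n (2*n+1)) = (n+3) choose 3"
proof (induction n)
  case 0
  have "R_double 1 0 1 = {((0,0),(1,0))}"
    unfolding R_double_def subgroup_pairs_def by (auto simp: le_Suc_eq)
  then show ?case by simp
next
  case (Suc n)
  have "card (R_double (n+1+1) (n+1) (2*n+1+2)) = card (R_double (n+1) n (2*n+1)) + card (Pset (n+1)) + card (Pset (n+1+1))"
    by (rule step_lemma) auto
  also have "\<dots> = ((n+3) choose 3) + ((n+3) choose 2)" using Suc P_pair[of n] by simp
  also have "\<dots> = (Suc n + 3) choose 3"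
    by (simp add: numeral_3_eq_3 numeral_2_eq_2)
  finally show ?case by (simp add: algebra_simps)
qed

lemma F2: "n \<ge> 1 \<Longrightarrow> card (R_double n n (2*n-1)) + card (Pset (n+1)) = (n+3) choose 3"
proof (induction n rule: dec_induct)
  case base
  have "R_double 1 1 1 = {((0,0),(1,0)), ((0,0),(0,1))}"
    unfolding R_double_def subgroup_pairs_def by (auto simp: le_Suc_eq)
  moreover have "card (Pset 2) = 2" using P_formula[of 2] by simp
  ultimately show ?case by (simp add: numeral_3_eq_3 numeral_2_eq_2)
next
  case (step n)
  have "card (R_double (n+1) (n+1) (2*n-1+2)) = card (R_double n n (2*n-1)) + card (Pset (n+1)) + card (Pset (n+1))"
    by (rule step_lemma) (use step.hyps in auto)
  then have "card (R_double (n+1) (n+1) (2*(n+1)-1)) + card (Pset (n+2)) = ((n+3) choose 3) + ((n+3) choose 2)"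
    using step.IH P_pair[of n] step.hyps by (simp add: algebra_simps)
  also have "\<dots> = (Suc n + 3) choose 3"
    by (simp add: numeral_3_eq_3 numeral_2_eq_2)
  finally show ?case by (simp add: algebra_simps)
qed

theorem lemma7p8:
  fixes n :: nat
  assumes "n \<ge> 2"
  shows "SR (n + 1) n = (n + 3) choose 3
    \<and> int (SR n n) = int ((n + 3) choose 3)
        - \<lfloor>real (n + 2) / 2\<rfloor> * \<lceil>real (n + 2) / 2\<rceil>"
proof
  have "SR (n+1) n = card (R_double (n+1) n (2*n+1))"
    unfolding SR_def by (simp add: mult_2)
  then show "SR (n + 1) n = (n + 3) choose 3" using F1 by simp
next
  have s: "SR n n = card (R_double n n (2*n-1))"
    unfolding SR_def by (simp add: mult_2)
  have fc: "\<lfloor>real (n + 2) / 2\<rfloor> * \<lceil>real (n + 2) / 2\<rceil> = int (card (Pset (n+1)))"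
    unfolding P_formula
  proof (cases "even n")
    case True then obtain r where r: "n = 2*r" by blast
    have e: "real (n+2) / 2 = real r + 1" using r by simp
    have f1: "\<lfloor>real r + 1\<rfloor> = int r + 1" by linarith
    have f2: "\<lceil>real r + 1\<rceil> = int r + 1" by linarith
    show "\<lfloor>real (n + 2) / 2\<rfloor> * \<lceil>real (n + 2) / 2\<rceil> = int ((n + 1 + 1) div 2 * ((n + 1 + 2) div 2))"
      unfolding e f1 f2 using r by (simp add: algebra_simps)
  next
    case False then obtain r where r: "n = 2*r+1" using oddE by blast
    have e: "real (n+2) / 2 = real r + 3/2" using r by simp
    have f1: "\<lfloor>real r + 3/2\<rfloor> = int r + 1" by linarith
    have f2: "\<lceil>real r + 3/2\<rceil> = int r + 2" by linarith
    show "\<lfloor>real (n + 2) / 2\<rfloor> * \<lceil>real (n + 2) / 2\<rceil> = int ((n + 1 + 1) div 2 * ((n + 1 + 2) div 2))"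
      unfolding e f1 f2 using r by (simp add: algebra_simps)
  qed
  have "card (R_double n n (2*n-1)) + card (Pset (n+1)) = (n+3) choose 3"
    using F2 assms by simp
  then show "int (SR n n) = int ((n + 3) choose 3) - \<lfloor>real (n + 2) / 2\<rfloor> * \<lceil>real (n + 2) / 2\<rceil>"
    unfolding s fc by linarith
qed

end
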